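(* Let $N\ge1$, $n=2N+1$, $L>0$, $\mu\in(0,1)$ and $\eta>4\mu n^2$. Then for any Bregman gradient algorithm applied to $(f_\mu,h_\mu)$ and initialized at $x_0=(0,\dots,0)$, the output $\bar x$ returned after performing at most $N$ calls to each one of the primal and mirror oracles satisfies \[ f_\mu(\bar x)-\min_{\mathbb{R}^n}f_\mu\ \ge\ \frac{L\,D_{h_\mu}(x_*,x_0)}{2N+1}\cdot\frac{1-\mu}{1+\mu+\eta+\frac\mu2(1+\eta)^2}. \]
   Context: $x_*=(1+\eta,1+\frac\eta2,\dots,1+\frac\eta n)$, $\hat f(x)=\|x-x_*\|_\infty$, $f_\mu(x)=\min_{u\in\mathbb{R}^n}\hat f(u)+\frac1{2\mu}\|x-u\|^2$ (Euclidean norm). $\phi_\mu(t)=t-\mu/2$ if $t\ge\mu$ and $t^2/(2\mu)$ otherwise; $d_\mu(x)=\frac\mu2\|x\|^2+\sum_{i=1}^n\phi_\mu(x^{(i)})$; $h_\mu=\frac1L(f_\mu+d_\mu)$. $D_h(x,y)=h(x)-h(y)-\langle\nabla h(y),x-y\rangle$. A Bregman gradient algorithm, applied to $(f,h)$ with $h$ having domain closure $C$, generates sets $\mathcal{V}_t$: $\mathcal{V}_0=\{x_0\}$; at each step $t$ it chooses $y_t\in\operatorname{Span}(\mathcal{V}_t)$ and either calls the primal oracle, setting $\mathcal{V}_{t+1}=\mathcal{V}_t\cup\{\nabla f(y_t),\nabla h(y_t)\}$, or calls the mirror oracle $\nabla h^*(y_t)=\operatorname{argmin}_{u\in C}h(u)-\langle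 y_t,u\rangle$, setting $\mathcal{V}_{t+1}=\mathcal{V}_t\cup\{\nabla h^*(y_t)\}$; after the last step $T$ it outputs some $\bar x\in\operatorname{Span}(\mathcal{V}_T)$. *)

theory Defs
  imports "HOL-Analysis.Analysis"
begin

text \<open>Vectors of R^n are represented as functions nat => real; coordinate k+1 of the
paper is index k (k < n), and a vector of R^n vanishes at all indices >= n.\<close>

type_synonym vec = "nat \<Rightarrow> real"

definition Rn :: "nat \<Rightarrow> vec set" where
  "Rn n = {x. \<forall>i\<ge>n. x i = 0}"

definition ip :: "nat \<Rightarrow> vec \<Rightarrow> vec \<Rightarrow> real" where
  "ip n x y = (\<Sum>i<n. x i * y i)"

definition sqnorm :: "nat \<Rightarrow> vec \<Rightarrow> real" where
  "sqnorm n x = (\<Sum>i<n. (x i)^2)"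

definition vsub :: "vec \<Rightarrow> vec \<Rightarrow> vec" where
  "vsub x y = (\<lambda>i. x i - y i)"

definition vspan :: "vec set \<Rightarrow> vec set" where
  "vspan V = {x. \<exists>S c. finite S \<and> S \<subseteq> V \<and> x = (\<lambda>i. \<Sum>v\<in>S. c v * v i)}"

definition xstar :: "real \<Rightarrow> nat \<Rightarrow> vec" where
  "xstar \<eta> n = (\<lambda>i. if i < n then 1 + \<eta> / real (i + 1) else 0)"

definition fhat :: "real \<Rightarrow> nat \<Rightarrow> vec \<Rightarrow> real" where
  "fhat \<eta> n x = Max ((\<lambda>i. \<bar>x i - xstar \<eta> n i\<bar>) ` {..<n})"

text \<open>Moreau envelope (the minimum is attained, so Inf = min).\<close>
definition fmu :: "real \<Rightarrow> real \<Rightarrow> nat \<Rightarrow> vec \<Rightarrow> real" where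
  "fmu \<eta> \<mu> n x = Inf ((\<lambda>u. fhat \<eta> n u + 1 / (2 * \<mu>) * sqnorm n (vsub x u)) ` Rn n)"

definition phimu :: "real \<Rightarrow> real \<Rightarrow> real" where
  "phimu \<mu> t = (if t \<ge> \<mu> then t - \<mu> / 2 else t^2 / (2 * \<mu>))"

definition dmu :: "real \<Rightarrow> nat \<Rightarrow> vec \<Rightarrow> real" where
  "dmu \<mu> n x = \<mu> / 2 * sqnorm n x + (\<Sum>i<n. phimu \<mu> (x i))"

definition hmu :: "real \<Rightarrow> real \<Rightarrow> real \<Rightarrow> nat \<Rightarrow> vec \<Rightarrow> real" where
  "hmu L \<eta> \<mu> n x = (fmu \<eta> \<mu> n x + dmu \<mu> n x) / L"

definition grad :: "nat \<Rightarrow> (vec \<Rightarrow> real) \<Rightarrow> vec \<Rightarrow> vec" where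
  "grad n g x = (\<lambda>i. if i < n then deriv (\<lambda>t. g (x(i := t))) (x i) else 0)"

definition bregman :: "nat \<Rightarrow> (vec \<Rightarrow> real) \<Rightarrow> vec \<Rightarrow> vec \<Rightarrow> real" where
  "bregman n h x y = h x - h y - ip n (grad n h y) (vsub x y)"

text \<open>u is a value of the mirror oracle at y: u minimizes h(u) - <y,u> over the
closure of dom h, which is all of R^n here.\<close>
definition mirror_pt :: "nat \<Rightarrow> (vec \<Rightarrow> real) \<Rightarrow> vec \<Rightarrow> vec \<Rightarrow> bool" where
  "mirror_pt n h y u \<longleftrightarrow> u \<in> Rn n \<and> (\<forall>v\<in>Rn n. h u - ip n y u \<le> h v - ip n y v)"

text \<open>A run of a Bregman gradient algorithm on (f,h) in R^n, with T steps, started at x0: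
V t are the sets of the paper, y t the query points, prim t says whether step t calls
the primal oracle (otherwise the mirror oracle, whose answer is m t), and xbar is the
output.\<close>
definition bregman_run ::
  "nat \<Rightarrow> (vec \<Rightarrow> real) \<Rightarrow> (vec \<Rightarrow> real) \<Rightarrow> vec \<Rightarrow> nat \<Rightarrow> (nat \<Rightarrow> vec set)
   \<Rightarrow> (nat \<Rightarrow> vec) \<Rightarrow> (nat \<Rightarrow> bool) \<Rightarrow> (nat \<Rightarrow> vec) \<Rightarrow> vec \<Rightarrow> bool" where
  "bregman_run n f h x0 T V y prim m xbar \<longleftrightarrow>
     V 0 = {x0} \<and>
     (\<forall>t<T. y t \<in> vspan (V t) \<and>
        (if prim t then V (Suc t) = V t \<union> {grad n f (y t), grad n h (y t)}
         else mirror_pt n h (y t) (m t) \<and> V (Suc t) = V t \<union> {m t})) \<and>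
     xbar \<in> vspan (V T)"

end

theory Submission
  imports Defs
begin

lemma fhat_ge: "j < n \<Longrightarrow> \<bar>u j - xstar \<eta> n j\<bar> \<le> fhat \<eta> n u"
  unfolding fhat_def by (rule Max_ge) auto

lemma fhat_le: "0 < n \<Longrightarrow> (\<And>j. j < n \<Longrightarrow> \<bar>u j - xstar \<eta> n j\<bar> \<le> c) \<Longrightarrow> fhat \<eta> n u \<le> c"
  unfolding fhat_def by (rule Max.boundedI) auto

lemma fhat_nonneg: "0 < n \<Longrightarrow> 0 \<le> fhat \<eta> n u"
  using fhat_ge[of 0 n u \<eta>] by linarith

lemma sqnorm_nonneg: "0 \<le> sqnorm n x"
  unfolding sqnorm_def by (auto intro: sum_nonneg)

lemma zero_Rn: "(\<lambda>_. 0) \<in> Rn n" unfolding Rn_def by auto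

lemma obj_nonneg: "0 < n \<Longrightarrow> 0 < \<mu> \<Longrightarrow> 0 \<le> fhat \<eta> n u + 1 / (2 * \<mu>) * sqnorm n (vsub x u)"
  using fhat_nonneg[of n \<eta> u] sqnorm_nonneg[of n "vsub x u"] by simp

lemma fmu_le: "0 < n \<Longrightarrow> 0 < \<mu> \<Longrightarrow> u \<in> Rn n \<Longrightarrow>
   fmu \<eta> \<mu> n x \<le> fhat \<eta> n u + 1 / (2 * \<mu>) * sqnorm n (vsub x u)"
  unfolding fmu_def
  apply (rule cInf_lower)
   apply simp
  apply (rule bdd_belowI[where m=0])
  using obj_nonneg by blast

lemma fmu_ge: "(\<And>u. u \<in> Rn n \<Longrightarrow> c \<le> fhat \<eta> n u + 1 / (2 * \<mu>) * sqnorm n (vsub x u))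
   \<Longrightarrow> c \<le> fmu \<eta> \<mu> n x"
  unfolding fmu_def
  by (rule cInf_greatest) (use zero_Rn in auto)

lemma fmu_nonneg: "0 < n \<Longrightarrow> 0 < \<mu> \<Longrightarrow> 0 \<le> fmu \<eta> \<mu> n x"
  by (rule fmu_ge) (rule obj_nonneg)

definition mK :: "real \<Rightarrow> nat \<Rightarrow> nat \<Rightarrow> vec \<Rightarrow> real" where
  "mK \<eta> n k u = Max ((\<lambda>j. \<bar>u j - xstar \<eta> n j\<bar>) ` {..<k})"

definition Q :: "real \<Rightarrow> real \<Rightarrow> nat \<Rightarrow> nat \<Rightarrow> vec \<Rightarrow> real" where
  "Q \<eta> \<mu> n k x = Inf ((\<lambda>u. mK \<eta> n k u + 1 / (2 * \<mu>) * (\<Sum>j<k. (x j - u j)^2)) ` Rn n)"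

lemma mK_ge: "j < k \<Longrightarrow> \<bar>u j - xstar \<eta> n j\<bar> \<le> mK \<eta> n k u"
  unfolding mK_def by (rule Max_ge) auto

lemma mK_le: "0 < k \<Longrightarrow> (\<And>j. j < k \<Longrightarrow> \<bar>u j - xstar \<eta> n j\<bar> \<le> c) \<Longrightarrow> mK \<eta> n k u \<le> c"
  unfolding mK_def by (rule Max.boundedI) auto

lemma mK_in: "0 < k \<Longrightarrow> \<exists>j<k. mK \<eta> n k u = \<bar>u j - xstar \<eta> n j\<bar>"
proof -
  assume "0 < k"
  then have "mK \<eta> n k u \<in> (\<lambda>j. \<bar>u j - xstar \<eta> n j\<bar>) ` {..<k}"
    unfolding mK_def by (intro Max_in) auto
  then show ?thesis by auto
qed

lemma qobj_nonneg: "0 < k \<Longrightarrow> 0 < \<mu> \<Longrightarrow> 0 \<le> mK \<eta> n k u + 1 / (2 * \<mu>) * (\<Sum>j<k. (x j - u j)^2)"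
proof -
  assume "0 < k" "0 < \<mu>"
  have "0 \<le> mK \<eta> n k u" using mK_ge[of 0 k u \<eta> n] \<open>0 < k\<close> by linarith
  moreover have "0 \<le> (\<Sum>j<k. (x j - u j)^2)" by (auto intro: sum_nonneg)
  ultimately show ?thesis using \<open>0 < \<mu>\<close> by simp
qed

lemma Q_cong: "(\<And>j. j < k \<Longrightarrow> x j = x' j) \<Longrightarrow> Q \<eta> \<mu> n k x = Q \<eta> \<mu> n k x'"
  unfolding Q_def by (intro arg_cong[where f=Inf] image_cong refl) (auto intro!: sum.cong)

lemma Q_le_fmu:
  assumes "0 < k" "k \<le> n" "0 < \<mu>"
  shows "Q \<eta> \<mu> n k x \<le> fmu \<eta> \<mu> n x"
proof (rule fmu_ge)
  fix u assume u: "u \<in> Rn n"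
  have "Q \<eta> \<mu> n k x \<le> mK \<eta> n k u + 1 / (2 * \<mu>) * (\<Sum>j<k. (x j - u j)^2)"
    unfolding Q_def
    apply (rule cInf_lower)
    using u apply simp
    apply (rule bdd_belowI[where m=0])
    using qobj_nonneg assms by blast
  also have "mK \<eta> n k u \<le> fhat \<eta> n u"
    using assms by (intro mK_le) (auto intro: fhat_ge)
  also have "(\<Sum>j<k. (x j - u j)^2) \<le> sqnorm n (vsub x u)"
    unfolding sqnorm_def vsub_def using assms by (intro sum_mono2) auto
  finally show "Q \<eta> \<mu> n k x \<le> fhat \<eta> n u + 1 / (2 * \<mu>) * sqnorm n (vsub x u)"
    using assms by (simp add: divide_right_mono)
qed

lemma sqnorm_restrict:
  assumes "k \<le> n"
  shows "sqnorm n (vsub x (\<lambda>j. if j < k then u j else x j)) = (\<Sum>j<k. (x j - u j)^2)"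
proof -
  have "sqnorm n (vsub x (\<lambda>j. if j < k then u j else x j)) = (\<Sum>j<n. if j < k then (x j - u j)^2 else 0)"
    unfolding sqnorm_def vsub_def by (intro sum.cong) auto
  also have "\<dots> = (\<Sum>j\<in>{..<n} \<inter> {j. j < k}. (x j - u j)^2)"
    by (simp add: sum.inter_restrict)
  also have "{..<n} \<inter> {j. j < k} = {..<k}" using assms by auto
  finally show ?thesis .
qed

lemma key_ineq:
  fixes a b c d0 e S \<mu> :: real
  assumes "0 < \<mu>" "a \<le> b + d0" "0 \<le> d0" "S \<ge> d0^2" "S \<ge> e^2" "e \<ge> 2 * \<mu>"
  shows "a \<le> b + 1 / (2 * \<mu>) * S"
proof -
  have "2 * \<mu> * d0 \<le> S"
  proof (cases "d0 \<le> e")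
    case True
    have "2 * \<mu> * d0 \<le> e * e" using True assms by (intro mult_mono) auto
    then show ?thesis using assms by (simp add: power2_eq_square)
  next
    case False
    have "2 * \<mu> * d0 \<le> d0 * d0" using False assms by (intro mult_right_mono) auto
    then show ?thesis using assms by (simp add: power2_eq_square)
  qed
  then have "d0 \<le> 1 / (2 * \<mu>) * S" using assms by (simp add: field_simps)
  then show ?thesis using assms by linarith
qed

lemma fmu_le_Q:
  assumes "0 < \<mu>" "t < k" "k \<le> n" "x \<in> Rn n"
    and xt: "\<bar>x t - xstar \<eta> n t\<bar> \<ge> B + 2 * \<mu>"
    and xj: "\<And>j. k \<le> j \<Longrightarrow> j < n \<Longrightarrow> \<bar>x j - xstar \<eta> n j\<bar> \<le> B"
  shows "fmu \<eta> \<mu> n x \<le> Q \<eta> \<mu> n k x"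
  unfolding Q_def
proof (rule cInf_greatest)
  show "(\<lambda>u. mK \<eta> n k u + 1 / (2 * \<mu>) * (\<Sum>j<k. (x j - u j)\<^sup>2)) ` Rn n \<noteq> {}"
    using zero_Rn by auto
  have k0: "0 < k" "0 < n" using assms by auto
  fix r assume "r \<in> (\<lambda>u. mK \<eta> n k u + 1 / (2 * \<mu>) * (\<Sum>j<k. (x j - u j)\<^sup>2)) ` Rn n"
  then obtain u where u: "u \<in> Rn n" and r: "r = mK \<eta> n k u + 1 / (2 * \<mu>) * (\<Sum>j<k. (x j - u j)\<^sup>2)"
    by auto
  show "fmu \<eta> \<mu> n x \<le> r"
  proof (cases "mK \<eta> n k u \<ge> B")
    case True
    define u' where "u' = (\<lambda>j. if j < k then u j else x j)"
    have u'R: "u' \<in> Rn n" using u \<open>x \<in> Rn n\<close> \<open>k \<le> n\<close> unfolding u'_def Rn_def by auto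
    have "fhat \<eta> n u' \<le> mK \<eta> n k u"
    proof (rule fhat_le[OF k0(2)])
      fix j assume "j < n"
      show "\<bar>u' j - xstar \<eta> n j\<bar> \<le> mK \<eta> n k u"
      proof (cases "j < k")
        case True then show ?thesis unfolding u'_def by (simp add: mK_ge)
      next
        case False then show ?thesis unfolding u'_def using xj[of j] \<open>j < n\<close> \<open>B \<le> _\<close> by auto
      qed
    qed
    then have "fmu \<eta> \<mu> n x \<le> mK \<eta> n k u + 1 / (2 * \<mu>) * sqnorm n (vsub x u')"
      using fmu_le[OF k0(2) assms(1) u'R, of \<eta> x] by linarith
    then show ?thesis unfolding r u'_def using sqnorm_restrict[OF \<open>k \<le> n\<close>] by simp
  next
    case False
    have "fmu \<eta> \<mu> n x \<le> fhat \<eta> n x + 1 / (2 * \<mu>) * sqnorm n (vsub x x)"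
      by (rule fmu_le[OF k0(2) assms(1) \<open>x \<in> Rn n\<close>])
    also have "sqnorm n (vsub x x) = 0" unfolding sqnorm_def vsub_def by simp
    also have "fhat \<eta> n x \<le> mK \<eta> n k x"
    proof (rule fhat_le[OF k0(2)])
      fix j assume "j < n"
      show "\<bar>x j - xstar \<eta> n j\<bar> \<le> mK \<eta> n k x"
      proof (cases "j < k")
        case True then show ?thesis by (simp add: mK_ge)
      next
        case False then show ?thesis using xj[of j] \<open>j < n\<close> xt mK_ge[OF \<open>t < k\<close>, of x \<eta> n] assms(1) by auto
      qed
    qed
    also have "mK \<eta> n k x \<le> r"
    proof -
      obtain j0 where j0: "j0 < k" "mK \<eta> n k x = \<bar>x j0 - xstar \<eta> n j0\<bar>" using mK_in[OF k0(1)] by blast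
      have a: "\<bar>x j0 - xstar \<eta> n j0\<bar> \<le> mK \<eta> n k u + \<bar>x j0 - u j0\<bar>"
        using mK_ge[OF j0(1), of u \<eta> n] by linarith
      have S1: "(x j0 - u j0)^2 \<le> (\<Sum>j<k. (x j - u j)\<^sup>2)"
        by (rule member_le_sum) (use j0 in auto)
      have S2: "(x t - u t)^2 \<le> (\<Sum>j<k. (x j - u j)\<^sup>2)"
        by (rule member_le_sum) (use \<open>t < k\<close> in auto)
      have "\<bar>u t - xstar \<eta> n t\<bar> < B" using mK_ge[OF \<open>t < k\<close>, of u \<eta> n] False by linarith
      then have e: "\<bar>x t - u t\<bar> \<ge> 2 * \<mu>" using xt by linarith
      show ?thesis unfolding r j0(2)
        by (rule key_ineq[OF assms(1) a abs_ge_zero _ _ e]) (use S1 S2 in auto)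
    qed
    finally show ?thesis by simp
  qed
qed

lemma fmu_lip:
  assumes "0 < \<mu>" "t < n"
  shows "fmu \<eta> \<mu> n (x(t := s)) \<le> fmu \<eta> \<mu> n x + \<bar>s - x t\<bar>"
proof -
  have "fmu \<eta> \<mu> n (x(t := s)) - \<bar>s - x t\<bar> \<le> fmu \<eta> \<mu> n x"
  proof (rule fmu_ge)
    fix u assume u: "u \<in> Rn n"
    define u' where "u' = u(t := u t + s - x t)"
    have u'R: "u' \<in> Rn n" using u assms unfolding u'_def Rn_def by auto
    have "fhat \<eta> n u' \<le> fhat \<eta> n u + \<bar>s - x t\<bar>"
    proof (rule fhat_le)
      show "0 < n" using assms by auto
      fix j assume "j < n"
      have "\<bar>u j - xstar \<eta> n j\<bar> \<le> fhat \<eta> n u" using fhat_ge[OF \<open>j < n\<close>] .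
      then show "\<bar>u' j - xstar \<eta> n j\<bar> \<le> fhat \<eta> n u + \<bar>s - x t\<bar>"
        unfolding u'_def by (cases "j = t") auto
    qed
    moreover have "vsub (x(t := s)) u' = vsub x u" unfolding vsub_def u'_def by auto
    ultimately show "fmu \<eta> \<mu> n (x(t := s)) - \<bar>s - x t\<bar> \<le> fhat \<eta> n u + 1 / (2 * \<mu>) * sqnorm n (vsub x u)"
      using fmu_le[OF _ assms(1) u'R, of \<eta> "x(t := s)"] assms by simp
  qed
  then show ?thesis by linarith
qed

lemma huber_lb:
  fixes a c \<mu> :: real
  assumes "0 < \<mu>"
  shows "c - \<mu> / 2 \<le> \<bar>a - c\<bar> + 1 / (2 * \<mu>) * a^2"
proof -
  have "0 \<le> (\<bar>a\<bar> - \<mu>)^2" by simp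
  then have "2 * \<mu> * \<bar>a\<bar> - \<mu>^2 \<le> a^2" by (simp add: power2_eq_square algebra_simps)
  then have "\<bar>a\<bar> - \<mu> / 2 \<le> 1 / (2 * \<mu>) * a^2" using assms by (simp add: field_simps power2_eq_square)
  moreover have "c - \<bar>a\<bar> \<le> \<bar>a - c\<bar>" by linarith
  ultimately show ?thesis by linarith
qed

lemma fmu_lb_coord:
  assumes "0 < \<mu>" "j < n"
  shows "xstar \<eta> n j - x j - \<mu> / 2 \<le> fmu \<eta> \<mu> n x"
proof (rule fmu_ge)
  fix u assume u: "u \<in> Rn n"
  have "\<bar>u j - xstar \<eta> n j\<bar> \<le> fhat \<eta> n u" using fhat_ge[OF \<open>j < n\<close>] .
  moreover have "(x j - u j)^2 \<le> sqnorm n (vsub x u)"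
    unfolding sqnorm_def vsub_def by (rule member_le_sum) (use assms in auto)
  moreover have "(xstar \<eta> n j - x j) - \<mu> / 2 \<le> \<bar>(u j - x j) - (xstar \<eta> n j - x j)\<bar> + 1 / (2 * \<mu>) * (u j - x j)^2"
    by (rule huber_lb[OF assms(1)])
  moreover have "(u j - x j)^2 = (x j - u j)^2" by (simp add: power2_commute)
  ultimately show "xstar \<eta> n j - x j - \<mu> / 2 \<le> fhat \<eta> n u + 1 / (2 * \<mu>) * sqnorm n (vsub x u)"
    using assms by (smt (verit) divide_right_mono mult_left_mono zero_le_divide_1_iff)
qed

lemma fmu_explicit:
  assumes "0 < \<mu>" "0 < n" "x \<in> Rn n"
    and "\<mu> \<le> xstar \<eta> n 0 - x 0"
    and "\<And>j. 0 < j \<Longrightarrow> j < n \<Longrightarrow> \<bar>x j - xstar \<eta> n j\<bar> \<le> xstar \<eta> n 0 - x 0 - \<mu>"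
  shows "fmu \<eta> \<mu> n x = xstar \<eta> n 0 - x 0 - \<mu> / 2"
proof (rule antisym)
  show "xstar \<eta> n 0 - x 0 - \<mu> / 2 \<le> fmu \<eta> \<mu> n x" by (rule fmu_lb_coord[OF assms(1,2)])
  define u where "u = x(0 := x 0 + \<mu>)"
  have uR: "u \<in> Rn n" using assms unfolding u_def Rn_def by auto
  have "fhat \<eta> n u \<le> xstar \<eta> n 0 - x 0 - \<mu>"
  proof (rule fhat_le[OF assms(2)])
    fix j assume "j < n"
    then show "\<bar>u j - xstar \<eta> n j\<bar> \<le> xstar \<eta> n 0 - x 0 - \<mu>"
      using assms(4) assms(5)[of j] unfolding u_def by (cases "j = 0") auto
  qed
  moreover have "sqnorm n (vsub x u) = \<mu>^2"
  proof -
    have "sqnorm n (vsub x u) = (\<Sum>j<n. if j = 0 then \<mu>^2 else 0)"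
      unfolding sqnorm_def vsub_def u_def by (intro sum.cong) auto
    also have "\<dots> = \<mu>^2" using assms(2) by simp
    finally show ?thesis .
  qed
  ultimately have "fmu \<eta> \<mu> n x \<le> xstar \<eta> n 0 - x 0 - \<mu> + 1 / (2 * \<mu>) * \<mu>^2"
    using fmu_le[OF assms(2,1) uR, of \<eta> x] by simp
  also have "1 / (2 * \<mu>) * \<mu>^2 = \<mu> / 2" using assms(1) by (simp add: power2_eq_square)
  finally show "fmu \<eta> \<mu> n x \<le> xstar \<eta> n 0 - x 0 - \<mu> / 2" by simp
qed

lemma phimu_0: "0 < \<mu> \<Longrightarrow> phimu \<mu> 0 = 0" unfolding phimu_def by simp
lemma phimu_nonneg: "0 < \<mu> \<Longrightarrow> 0 \<le> phimu \<mu> t" unfolding phimu_def by auto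
lemma phimu_small: "\<bar>t\<bar> < \<mu> \<Longrightarrow> phimu \<mu> t = t^2 / (2 * \<mu>)" unfolding phimu_def by auto
lemma phimu_le: "0 < \<mu> \<Longrightarrow> 0 \<le> t \<Longrightarrow> phimu \<mu> t \<le> t"
proof -
  assume a: "0 < \<mu>" "0 \<le> t"
  show ?thesis
  proof (cases "\<mu> \<le> t")
    case False
    then have "t * t \<le> \<mu> * t" using a by (intro mult_right_mono) auto
    moreover have "\<mu> * t \<le> \<mu> * (t * 2)" using a by simp
    ultimately have "t^2 \<le> t * (2 * \<mu>)" by (simp add: power2_eq_square algebra_simps)
    then show ?thesis using False a unfolding phimu_def by (simp add: divide_le_eq)
  qed (use a in \<open>auto simp: phimu_def\<close>)
qed

lemma dmu_alt: "dmu \<mu> n x = (\<Sum>j<n. \<mu> / 2 * (x j)^2 + phimu \<mu> (x j))"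
  unfolding dmu_def sqnorm_def by (simp add: sum.distrib sum_distrib_left)

lemma sum_upd:
  fixes g :: "real \<Rightarrow> real"
  assumes "finite A" "i \<in> A"
  shows "(\<Sum>j\<in>A. g ((x(i := s)) j)) = (\<Sum>j\<in>A. g (x j)) - g (x i) + g s"
proof -
  have "(\<Sum>j\<in>A. g ((x(i := s)) j)) = g s + (\<Sum>j\<in>A - {i}. g ((x(i := s)) j))"
    using sum.remove[OF assms, of "\<lambda>j. g ((x(i := s)) j)"] by simp
  also have "(\<Sum>j\<in>A - {i}. g ((x(i := s)) j)) = (\<Sum>j\<in>A - {i}. g (x j))"
    by (intro sum.cong) auto
  also have "\<dots> = (\<Sum>j\<in>A. g (x j)) - g (x i)"
    using sum.remove[OF assms, of "\<lambda>j. g (x j)"] by linarith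
  finally show ?thesis by simp
qed

lemma dmu_upd0:
  assumes "0 < \<mu>" "i < n" "x i = 0" "\<bar>s\<bar> < \<mu>"
  shows "dmu \<mu> n (x(i := s)) = dmu \<mu> n x + (\<mu> / 2 + 1 / (2 * \<mu>)) * s^2"
  unfolding dmu_alt
  using sum_upd[of "{..<n}" i "\<lambda>v. \<mu> / 2 * v^2 + phimu \<mu> v" x s] assms
  by (simp add: phimu_0 phimu_small algebra_simps)

lemma deriv_local_quad:
  fixes g :: "real \<Rightarrow> real"
  assumes "0 < r" "\<And>s. \<bar>s\<bar> < r \<Longrightarrow> g s = a + b * s + c * s^2"
  shows "deriv g 0 = b"
proof -
  have "((\<lambda>s. a + b * s + c * s^2) has_field_derivative (0 + b * 1 + c * (2 * 0 ^ 1 * 1))) (at 0)"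
    by (intro derivative_eq_intros) auto
  then have d: "((\<lambda>s. a + b * s + c * s^2) has_field_derivative b) (at 0)" by simp
  have "(g has_field_derivative b) (at 0)"
    by (rule has_field_derivative_transform_within_open[OF d, of "ball 0 r"]) (use assms in auto)
  then show ?thesis by (rule DERIV_imp_deriv)
qed

lemma xs_val: "i < n \<Longrightarrow> xstar \<eta> n i = 1 + \<eta> / (real i + 1)"
  unfolding xstar_def by simp

lemma xs_gap:
  assumes "0 < \<mu>" "\<eta> > 4 * \<mu> * real n ^ 2" "t + 2 \<le> n"
  shows "xstar \<eta> n t > xstar \<eta> n (t + 1) + 4 * \<mu>"
proof -
  define a where "a = real t + 1"
  define b where "b = real t + 2"
  have ab: "0 < a" "0 < b" "b = a + 1" "b \<le> real n" using assms(3) unfolding a_def b_def by auto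
  have "a * b \<le> real n * real n" using ab by (intro mult_mono) auto
  then have "4 * \<mu> * (a * b) \<le> 4 * \<mu> * real n ^ 2" using assms(1) by (simp add: power2_eq_square)
  then have h: "\<eta> > 4 * \<mu> * (a * b)" using assms(2) by linarith
  have "\<eta> / a - \<eta> / b = \<eta> / (a * b)" using ab by (simp add: field_simps)
  moreover have "\<eta> / (a * b) > 4 * \<mu>" using h ab by (simp add: less_divide_eq)
  ultimately have "\<eta> / a > \<eta> / b + 4 * \<mu>" by linarith
  moreover have "xstar \<eta> n t = 1 + \<eta> / a" "xstar \<eta> n (t + 1) = 1 + \<eta> / b"
    using assms(3) unfolding a_def b_def xstar_def by (auto simp: add.commute)
  ultimately show ?thesis by linarith
qed

lemma xs_mono:
  assumes "0 < \<eta>" "i \<le> j" "j < n"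
  shows "xstar \<eta> n j \<le> xstar \<eta> n i" "1 \<le> xstar \<eta> n j"
proof -
  have "\<eta> / (real j + 1) \<le> \<eta> / (real i + 1)" using assms by (intro divide_left_mono) auto
  then show "xstar \<eta> n j \<le> xstar \<eta> n i" using assms unfolding xstar_def by (auto simp: add.commute)
  show "1 \<le> xstar \<eta> n j" using assms unfolding xstar_def by auto
qed

lemma Rn_mono: "a \<le> b \<Longrightarrow> Rn a \<subseteq> Rn b" unfolding Rn_def by auto

lemma fmu_loc_const:
  assumes mu: "0 < \<mu>" and eta: "0 < \<eta>" "\<eta> > 4 * \<mu> * real n ^ 2"
    and y: "y \<in> Rn t" and tn: "t + 2 \<le> n" and i: "t + 1 \<le> i" "i < n" and s: "\<bar>s\<bar> < 2 * \<mu>"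
  shows "fmu \<eta> \<mu> n (y(i := s)) = fmu \<eta> \<mu> n y"
proof -
  define B where "B = xstar \<eta> n (t + 1) + \<bar>s\<bar>"
  have gap: "xstar \<eta> n t > xstar \<eta> n (t + 1) + 4 * \<mu>" by (rule xs_gap[OF mu eta(2) tn])
  have yR: "y \<in> Rn n" using y Rn_mono[of t n] tn by auto
  have y0: "\<And>j. t \<le> j \<Longrightarrow> y j = 0" using y unfolding Rn_def by auto
  have main: "fmu \<eta> \<mu> n x = Q \<eta> \<mu> n (t + 1) x" if x: "x \<in> Rn n" "x t = 0"
      "\<And>j. t + 1 \<le> j \<Longrightarrow> \<bar>x j\<bar> \<le> \<bar>s\<bar>" for x
  proof (rule antisym)
    show "fmu \<eta> \<mu> n x \<le> Q \<eta> \<mu> n (t + 1) x"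
    proof (rule fmu_le_Q[OF mu _ _ x(1), of t _ B])
      show "B + 2 * \<mu> \<le> \<bar>x t - xstar \<eta> n t\<bar>" using gap x(2) s xs_mono(2)[OF eta(1) _ , of t t n] tn
        unfolding B_def by auto
      fix j assume j: "t + 1 \<le> j" "j < n"
      have "xstar \<eta> n j \<le> xstar \<eta> n (t + 1)" "1 \<le> xstar \<eta> n j"
        using xs_mono[OF eta(1) j(1) j(2)] by auto
      then show "\<bar>x j - xstar \<eta> n j\<bar> \<le> B" using x(3)[OF j(1)] unfolding B_def by linarith
    qed (use tn in auto)
    show "Q \<eta> \<mu> n (t + 1) x \<le> fmu \<eta> \<mu> n x" by (rule Q_le_fmu) (use tn mu in auto)
  qed
  have "fmu \<eta> \<mu> n (y(i := s)) = Q \<eta> \<mu> n (t + 1) (y(i := s))"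
    by (rule main) (use yR i y0 in \<open>auto simp: Rn_def\<close>)
  also have "\<dots> = Q \<eta> \<mu> n (t + 1) y" by (rule Q_cong) (use i in auto)
  also have "\<dots> = fmu \<eta> \<mu> n y"
    by (rule main[symmetric]) (use yR i y0 in \<open>auto simp: Rn_def\<close>)
  finally show ?thesis .
qed

lemma grad_f_zero:
  assumes mu: "0 < \<mu>" and eta: "0 < \<eta>" "\<eta> > 4 * \<mu> * real n ^ 2"
    and y: "y \<in> Rn t" and tn: "t + 2 \<le> n" and i: "t + 1 \<le> i"
  shows "grad n (fmu \<eta> \<mu> n) y i = 0"
proof (cases "i < n")
  case True
  have yi: "y i = 0" using y i unfolding Rn_def by auto
  have "deriv (\<lambda>s. fmu \<eta> \<mu> n (y(i := s))) 0 = 0"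
    by (rule deriv_local_quad[where r="2*\<mu>" and a="fmu \<eta> \<mu> n y" and c=0])
       (use fmu_loc_const[OF mu eta y tn i True] mu in auto)
  then show ?thesis unfolding grad_def using True yi by simp
qed (simp add: grad_def)

lemma grad_h_zero:
  assumes mu: "0 < \<mu>" and eta: "0 < \<eta>" "\<eta> > 4 * \<mu> * real n ^ 2"
    and y: "y \<in> Rn t" and tn: "t + 2 \<le> n" and i: "t + 1 \<le> i" and L: "0 < L"
  shows "grad n (hmu L \<eta> \<mu> n) y i = 0"
proof (cases "i < n")
  case True
  have yi: "y i = 0" using y i unfolding Rn_def by auto
  have "deriv (\<lambda>s. hmu L \<eta> \<mu> n (y(i := s))) 0 = 0"
  proof (rule deriv_local_quad[where r="\<mu>" and a="(fmu \<eta> \<mu> n y + dmu \<mu> n y) / L"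
        and c="(\<mu> / 2 + 1 / (2 * \<mu>)) / L"])
    fix s :: real assume s: "\<bar>s\<bar> < \<mu>"
    have "fmu \<eta> \<mu> n (y(i := s)) = fmu \<eta> \<mu> n y"
      using fmu_loc_const[OF mu eta y tn i True] s by auto
    moreover have "dmu \<mu> n (y(i := s)) = dmu \<mu> n y + (\<mu> / 2 + 1 / (2 * \<mu>)) * s^2"
      by (rule dmu_upd0) (use mu True yi s in auto)
    ultimately show "hmu L \<eta> \<mu> n (y(i := s)) = (fmu \<eta> \<mu> n y + dmu \<mu> n y) / L + 0 * s
        + (\<mu> / 2 + 1 / (2 * \<mu>)) / L * s^2"
      unfolding hmu_def using L by (simp add: field_simps)
  qed (use mu in auto)
  then show ?thesis unfolding grad_def using True yi by simp
qed (simp add: grad_def)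

lemma grad_h_origin:
  assumes mu: "0 < \<mu>" "\<mu> < 1" and eta: "0 < \<eta>" "\<eta> > 4 * \<mu> * real n ^ 2"
    and n: "2 \<le> n" and L: "0 < L"
  shows "grad n (hmu L \<eta> \<mu> n) (\<lambda>_. 0) = (\<lambda>i. if i = 0 then - 1 / L else 0)"
proof
  fix i
  show "grad n (hmu L \<eta> \<mu> n) (\<lambda>_. 0) i = (if i = 0 then - 1 / L else 0)"
  proof (cases "i = 0")
    case False
    then show ?thesis using grad_h_zero[OF mu(1) eta zero_Rn[of 0], of i L] L n by simp
  next
    case True
    have n3: "real n \<ge> 2" using n by simp
    have "(1::real) \<le> real n ^ 2" using n3 by (intro one_le_power) auto
    then have "4 * \<mu> * 1 \<le> 4 * \<mu> * real n ^ 2" using mu by (intro mult_left_mono) auto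
    then have eta4: "\<eta> > 4 * \<mu>" using eta by linarith
    have "deriv (\<lambda>s. hmu L \<eta> \<mu> n ((\<lambda>_. 0)(0 := s))) 0 = - 1 / L"
    proof (rule deriv_local_quad[where r="\<mu>" and a="(1 + \<eta> - \<mu> / 2) / L"
        and c="(\<mu> / 2 + 1 / (2 * \<mu>)) / L"])
      fix s :: real assume s: "\<bar>s\<bar> < \<mu>"
      have x0: "xstar \<eta> n 0 = 1 + \<eta>" using n unfolding xstar_def by simp
      have "fmu \<eta> \<mu> n ((\<lambda>_. 0)(0 := s)) = xstar \<eta> n 0 - s - \<mu> / 2"
      proof -
        have "fmu \<eta> \<mu> n ((\<lambda>_. 0)(0 := s)) = xstar \<eta> n 0 - ((\<lambda>_. 0)(0 := s) :: vec) 0 - \<mu> / 2"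
        proof (rule fmu_explicit[OF mu(1)])
          show "0 < n" using n by simp
          show "(\<lambda>_. 0)(0 := s) \<in> Rn n" using n unfolding Rn_def by auto
          show "\<mu> \<le> xstar \<eta> n 0 - ((\<lambda>_. 0)(0 := s) :: vec) 0" using x0 s eta4 mu by auto
          fix j assume j: "0 < j" "j < n"
          have "xstar \<eta> n j \<le> xstar \<eta> n 1" "1 \<le> xstar \<eta> n j"
            using xs_mono[OF eta(1), of 1 j n] j by auto
          moreover have "xstar \<eta> n 1 = 1 + \<eta> / 2" using n unfolding xstar_def by simp
          ultimately show "\<bar>((\<lambda>_. 0)(0 := s) :: vec) j - xstar \<eta> n j\<bar> \<le> xstar \<eta> n 0 - ((\<lambda>_. 0)(0 := s) :: vec) 0 - \<mu>"
            using j x0 s eta4 by auto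
        qed
        then show ?thesis by simp
      qed
      moreover have "dmu \<mu> n ((\<lambda>_. 0)(0 := s)) = dmu \<mu> n (\<lambda>_. 0) + (\<mu> / 2 + 1 / (2 * \<mu>)) * s^2"
        by (rule dmu_upd0) (use mu n s in auto)
      moreover have "dmu \<mu> n (\<lambda>_. 0) = 0" unfolding dmu_alt using phimu_0[OF mu(1)] by simp
      ultimately show "hmu L \<eta> \<mu> n ((\<lambda>_. 0)(0 := s)) = (1 + \<eta> - \<mu> / 2) / L + - 1 / L * s
        + (\<mu> / 2 + 1 / (2 * \<mu>)) / L * s^2"
      proof -
        assume F: "fmu \<eta> \<mu> n ((\<lambda>_. 0)(0 := s)) = xstar \<eta> n 0 - s - \<mu> / 2"
          and D: "dmu \<mu> n ((\<lambda>_. 0)(0 := s)) = dmu \<mu> n (\<lambda>_. 0) + (\<mu> / 2 + 1 / (2 * \<mu>)) * s^2"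
          and D0: "dmu \<mu> n (\<lambda>_. 0) = 0"
        have "hmu L \<eta> \<mu> n ((\<lambda>_. 0)(0 := s)) = ((1 + \<eta> - \<mu> / 2) - s + (\<mu> / 2 + 1 / (2 * \<mu>)) * s^2) / L"
          unfolding hmu_def F D D0 x0 by simp
        also have "\<dots> = (1 + \<eta> - \<mu> / 2) / L + - 1 / L * s + (\<mu> / 2 + 1 / (2 * \<mu>)) / L * s^2"
          using L by (simp add: field_simps)
        finally show ?thesis .
      qed
    qed (use mu in auto)
    then show ?thesis unfolding grad_def using True n by simp
  qed
qed

lemma ip_cong_low:
  assumes "y \<in> Rn t" "\<And>j. j < t \<Longrightarrow> v j = u j"
  shows "ip n y v = ip n y u"
  unfolding ip_def
proof (rule sum.cong)
  fix j
  show "y j * v j = y j * u j"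
  proof (cases "j < t")
    case False then have "y j = 0" using assms(1) unfolding Rn_def by auto
    then show ?thesis by simp
  qed (use assms(2) in auto)
qed simp

lemma mirror_in:
  assumes mu: "0 < \<mu>" and eta: "0 < \<eta>" "\<eta> > 4 * \<mu> * real n ^ 2" and L: "0 < L"
    and y: "y \<in> Rn t" and tn: "t + 2 \<le> n" and m: "mirror_pt n (hmu L \<eta> \<mu> n) y u"
  shows "u \<in> Rn (Suc t)"
proof -
  have uR: "u \<in> Rn n" and minu: "\<And>v. v \<in> Rn n \<Longrightarrow>
      hmu L \<eta> \<mu> n u - ip n y u \<le> hmu L \<eta> \<mu> n v - ip n y v"
    using m unfolding mirror_pt_def by auto
  have tn': "t < n" using tn by simp
  have ut: "u t \<le> \<mu>"
  proof (rule ccontr)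
    assume "\<not> u t \<le> \<mu>"
    then have a: "u t > \<mu>" by simp
    define v where "v = u(t := \<mu>)"
    have vR: "v \<in> Rn n" using uR tn' unfolding v_def Rn_def by auto
    have f: "fmu \<eta> \<mu> n v \<le> fmu \<eta> \<mu> n u + (u t - \<mu>)"
      using fmu_lip[OF mu tn', of \<eta> u \<mu>] a unfolding v_def by simp
    have "dmu \<mu> n v = dmu \<mu> n u - (\<mu> / 2 * (u t)^2 + phimu \<mu> (u t)) + (\<mu> / 2 * \<mu>^2 + phimu \<mu> \<mu>)"
      unfolding dmu_alt v_def
      by (rule sum_upd[of "{..<n}" t "\<lambda>z. \<mu> / 2 * z^2 + phimu \<mu> z"]) (use tn' in auto)
    moreover have "phimu \<mu> (u t) = u t - \<mu> / 2" "phimu \<mu> \<mu> = \<mu> / 2" using a unfolding phimu_def by auto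
    ultimately have d: "dmu \<mu> n v = dmu \<mu> n u - \<mu> / 2 * (u t)^2 - u t + \<mu> / 2 * \<mu>^2 + \<mu>" by simp
    have "\<mu>^2 < (u t)^2" using a mu by (intro power_strict_mono) auto
    then have "\<mu> / 2 * \<mu>^2 < \<mu> / 2 * (u t)^2" using mu by (intro mult_strict_left_mono) auto
    then have "fmu \<eta> \<mu> n v + dmu \<mu> n v < fmu \<eta> \<mu> n u + dmu \<mu> n u" using f d mu by linarith
    then have "hmu L \<eta> \<mu> n v < hmu L \<eta> \<mu> n u" unfolding hmu_def using L by (simp add: divide_strict_right_mono)
    moreover have "ip n y v = ip n y u" by (rule ip_cong_low[OF y]) (auto simp: v_def)
    ultimately show False using minu[OF vR] by linarith
  qed
  show ?thesis
  proof (rule ccontr)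
    assume "u \<notin> Rn (Suc t)"
    then obtain j0 where j0: "Suc t \<le> j0" "u j0 \<noteq> 0" unfolding Rn_def by auto
    then have j0n: "j0 < n" using uR unfolding Rn_def by (metis (mono_tags, lifting) mem_Collect_eq not_le)
    define v where "v = (\<lambda>j. if j < Suc t then u j else 0)"
    have vR: "v \<in> Rn n" using uR tn' unfolding v_def Rn_def by auto
    have gap: "xstar \<eta> n t > xstar \<eta> n (t + 1) + 4 * \<mu>" by (rule xs_gap[OF mu eta(2) tn])
    have "fmu \<eta> \<mu> n v \<le> Q \<eta> \<mu> n (Suc t) v"
    proof (rule fmu_le_Q[OF mu _ _ vR, of t _ "xstar \<eta> n (t + 1)"])
      show "xstar \<eta> n (t + 1) + 2 * \<mu> \<le> \<bar>v t - xstar \<eta> n t\<bar>"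
        using gap ut mu unfolding v_def by auto
      fix j assume j: "Suc t \<le> j" "j < n"
      have "xstar \<eta> n j \<le> xstar \<eta> n (t + 1)" "1 \<le> xstar \<eta> n j"
        using xs_mono[OF eta(1), of "t+1" j n] j by auto
      then show "\<bar>v j - xstar \<eta> n j\<bar> \<le> xstar \<eta> n (t + 1)" using j unfolding v_def by auto
    qed (use tn in auto)
    also have "\<dots> = Q \<eta> \<mu> n (Suc t) u" by (rule Q_cong) (simp add: v_def)
    also have "\<dots> \<le> fmu \<eta> \<mu> n u" by (rule Q_le_fmu) (use tn mu in auto)
    finally have f: "fmu \<eta> \<mu> n v \<le> fmu \<eta> \<mu> n u" .
    have "dmu \<mu> n v < dmu \<mu> n u"
      unfolding dmu_alt
    proof (rule sum_strict_mono_ex1)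
      show "\<forall>j\<in>{..<n}. \<mu> / 2 * (v j)^2 + phimu \<mu> (v j) \<le> \<mu> / 2 * (u j)^2 + phimu \<mu> (u j)"
        using phimu_nonneg[OF mu] phimu_0[OF mu] mu unfolding v_def by auto
      have "0 < (u j0)^2" using j0 by simp
      then have "0 < \<mu> / 2 * (u j0)^2" using mu by simp
      then have "0 < \<mu> / 2 * (u j0)^2 + phimu \<mu> (u j0)" using phimu_nonneg[OF mu, of "u j0"] by linarith
      then show "\<exists>j\<in>{..<n}. \<mu> / 2 * (v j)^2 + phimu \<mu> (v j) < \<mu> / 2 * (u j)^2 + phimu \<mu> (u j)"
        using j0 j0n phimu_0[OF mu] unfolding v_def by (intro bexI[of _ j0]) auto
    qed simp
    then have "hmu L \<eta> \<mu> n v < hmu L \<eta> \<mu> n u" unfolding hmu_def using L f by (simp add: divide_strict_right_mono)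
    moreover have "ip n y v = ip n y u" by (rule ip_cong_low[OF y]) (auto simp: v_def)
    ultimately show False using minu[OF vR] by linarith
  qed
qed

lemma vspan_sub: "V \<subseteq> Rn t \<Longrightarrow> vspan V \<subseteq> Rn t"
  unfolding vspan_def Rn_def by (auto intro!: sum.neutral)

lemma fmu_xstar: "0 < n \<Longrightarrow> 0 < \<mu> \<Longrightarrow> fmu \<eta> \<mu> n (xstar \<eta> n) = 0"
proof -
  assume a: "0 < n" "0 < \<mu>"
  have xR: "xstar \<eta> n \<in> Rn n" unfolding Rn_def xstar_def by auto
  have "fhat \<eta> n (xstar \<eta> n) \<le> 0" by (rule fhat_le[OF a(1)]) simp
  moreover have "sqnorm n (vsub (xstar \<eta> n) (xstar \<eta> n)) = 0" unfolding sqnorm_def vsub_def by simp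
  ultimately have "fmu \<eta> \<mu> n (xstar \<eta> n) \<le> 0" using fmu_le[OF a xR, of \<eta> "xstar \<eta> n"] by simp
  then show ?thesis using fmu_nonneg[OF a, of \<eta> "xstar \<eta> n"] by linarith
qed

lemma fmu_zero:
  assumes mu: "0 < \<mu>" "\<mu> < 1" and eta: "0 < \<eta>" "4 * \<mu> < \<eta>" and n: "0 < n"
  shows "fmu \<eta> \<mu> n (\<lambda>_. 0) = 1 + \<eta> - \<mu> / 2"
proof -
  have x0: "xstar \<eta> n 0 = 1 + \<eta>" using n unfolding xstar_def by simp
  have "fmu \<eta> \<mu> n (\<lambda>_. 0) = xstar \<eta> n 0 - (\<lambda>_. 0 :: real) 0 - \<mu> / 2"
  proof (rule fmu_explicit[OF mu(1) n zero_Rn])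
    show "\<mu> \<le> xstar \<eta> n 0 - 0" using x0 eta mu by auto
    fix j assume j: "0 < j" "j < n"
    have "xstar \<eta> n j \<le> xstar \<eta> n 1" "1 \<le> xstar \<eta> n j"
      using xs_mono[OF eta(1), of 1 j n] j by auto
    moreover have "xstar \<eta> n 1 = 1 + \<eta> / 2" using j unfolding xstar_def by simp
    ultimately show "\<bar>0 - xstar \<eta> n j\<bar> \<le> xstar \<eta> n 0 - 0 - \<mu>"
      using j x0 eta by auto
  qed
  then show ?thesis using x0 by simp
qed

theorem proposition3p8:
  fixes N n T :: nat and L \<mu> \<eta> :: real
    and V :: "nat \<Rightarrow> vec set" and y m :: "nat \<Rightarrow> vec" and prim :: "nat \<Rightarrow> bool"
    and xbar :: vec
  assumes "N \<ge> 1" and "n = 2 * N + 1" and "L > 0" and "0 < \<mu>" and "\<mu> < 1"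
    and "\<eta> > 4 * \<mu> * real n ^ 2"
    and "bregman_run n (fmu \<eta> \<mu> n) (hmu L \<eta> \<mu> n) (\<lambda>_. 0) T V y prim m xbar"
    and "card {t. t < T \<and> prim t} \<le> N"
    and "card {t. t < T \<and> \<not> prim t} \<le> N"
  shows "fmu \<eta> \<mu> n xbar - Inf (fmu \<eta> \<mu> n ` Rn n)
         \<ge> L * bregman n (hmu L \<eta> \<mu> n) (xstar \<eta> n) (\<lambda>_. 0) / real (2 * N + 1)
           * ((1 - \<mu>) / (1 + \<mu> + \<eta> + \<mu> / 2 * (1 + \<eta>)^2))"
proof -
  note N = assms(1) and nN = assms(2) and L = assms(3) and mu = assms(4,5) and etan = assms(6)
  note run = assms(7)[unfolded bregman_run_def]
  have n3: "3 \<le> n" using N nN by simp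
  have "(1::real) \<le> real n ^ 2" using n3 by (intro one_le_power) auto
  then have "4 * \<mu> * 1 \<le> 4 * \<mu> * real n ^ 2" using mu by (intro mult_left_mono) auto
  then have eta4: "\<eta> > 4 * \<mu>" using etan by linarith
  have eta0: "0 < \<eta>" using eta4 mu by linarith
  have "{..<T} = {t. t < T \<and> prim t} \<union> {t. t < T \<and> \<not> prim t}" by auto
  then have "T = card ({t. t < T \<and> prim t} \<union> {t. t < T \<and> \<not> prim t})" by (metis card_lessThan)
  also have "\<dots> = card {t. t < T \<and> prim t} + card {t. t < T \<and> \<not> prim t}"
    by (rule card_Un_disjoint) auto
  finally have T2N: "T \<le> 2 * N" using assms(8,9) by linarith
  have inv: "t \<le> T \<Longrightarrow> V t \<subseteq> Rn t" for t
  proof (induction t)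
    case 0
    then show ?case using run unfolding Rn_def by auto
  next
    case (Suc t)
    then have tT: "t < T" by simp
    have Vt: "V t \<subseteq> Rn t" using Suc by simp
    have yt: "y t \<in> Rn t" using run tT vspan_sub[OF Vt] by auto
    have tn: "t + 2 \<le> n" using tT T2N nN by simp
    have VS: "V t \<subseteq> Rn (Suc t)" using Vt Rn_mono[of t "Suc t"] by auto
    show ?case
    proof (cases "prim t")
      case True
      then have eq: "V (Suc t) = V t \<union> {grad n (fmu \<eta> \<mu> n) (y t), grad n (hmu L \<eta> \<mu> n) (y t)}"
        using run tT by auto
      have "grad n (fmu \<eta> \<mu> n) (y t) \<in> Rn (Suc t)"
        unfolding Rn_def using grad_f_zero[OF mu(1) eta0 etan yt tn] by auto
      moreover have "grad n (hmu L \<eta> \<mu> n) (y t) \<in> Rn (Suc t)"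
        unfolding Rn_def using grad_h_zero[OF mu(1) eta0 etan yt tn _ L] by auto
      ultimately show ?thesis using eq VS by auto
    next
      case False
      then have "mirror_pt n (hmu L \<eta> \<mu> n) (y t) (m t)" "V (Suc t) = V t \<union> {m t}"
        using run tT by auto
      then show ?thesis using mirror_in[OF mu(1) eta0 etan L yt tn] VS by auto
    qed
  qed
  have "xbar \<in> Rn T" using run vspan_sub[OF inv[of T]] by auto
  then have xb: "xbar (2 * N) = 0" using T2N unfolding Rn_def by auto
  have "xstar \<eta> n (2 * N) - xbar (2 * N) - \<mu> / 2 \<le> fmu \<eta> \<mu> n xbar"
    by (rule fmu_lb_coord[OF mu(1)]) (use nN in auto)
  moreover have "1 \<le> xstar \<eta> n (2 * N)" using xs_mono(2)[OF eta0, of "2 * N" "2 * N" n] nN by auto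
  ultimately have fb: "1 - \<mu> / 2 \<le> fmu \<eta> \<mu> n xbar" using xb by linarith
  have n0: "0 < n" using n3 by simp
  have xsR: "xstar \<eta> n \<in> Rn n" unfolding Rn_def xstar_def by auto
  have "Inf (fmu \<eta> \<mu> n ` Rn n) \<le> fmu \<eta> \<mu> n (xstar \<eta> n)"
    apply (rule cInf_lower)
    using xsR apply simp
    apply (rule bdd_belowI[where m=0])
    using fmu_nonneg[OF n0 mu(1)] by blast
  then have inf0: "Inf (fmu \<eta> \<mu> n ` Rn n) \<le> 0" using fmu_xstar[OF n0 mu(1)] by simp
  have LHS: "1 - \<mu> / 2 \<le> fmu \<eta> \<mu> n xbar - Inf (fmu \<eta> \<mu> n ` Rn n)" using fb inf0 by linarith
  have g0: "grad n (hmu L \<eta> \<mu> n) (\<lambda>_. 0) = (\<lambda>i. if i = 0 then - 1 / L else 0)"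
    by (rule grad_h_origin[OF mu eta0 etan _ L]) (use n3 in auto)
  have x0: "xstar \<eta> n 0 = 1 + \<eta>" using n0 unfolding xstar_def by simp
  have "ip n (grad n (hmu L \<eta> \<mu> n) (\<lambda>_. 0)) (vsub (xstar \<eta> n) (\<lambda>_. 0))
      = (\<Sum>i<n. if i = 0 then - 1 / L * xstar \<eta> n i else 0)"
    unfolding g0 ip_def vsub_def by (intro sum.cong) auto
  also have "\<dots> = - 1 / L * (1 + \<eta>)" using n0 x0 by simp
  finally have ipv: "ip n (grad n (hmu L \<eta> \<mu> n) (\<lambda>_. 0)) (vsub (xstar \<eta> n) (\<lambda>_. 0)) = - 1 / L * (1 + \<eta>)" .
  define D where "D = dmu \<mu> n (xstar \<eta> n)"
  have d0: "dmu \<mu> n (\<lambda>_. 0) = 0" unfolding dmu_alt using phimu_0[OF mu(1)] by simp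
  have "bregman n (hmu L \<eta> \<mu> n) (xstar \<eta> n) (\<lambda>_. 0) = (0 + D) / L - (1 + \<eta> - \<mu> / 2 + 0) / L + (1 + \<eta>) / L"
    unfolding bregman_def ipv hmu_def D_def fmu_xstar[OF n0 mu(1)] fmu_zero[OF mu eta0 eta4 n0] d0 by simp
  also have "(0 + D) / L - (1 + \<eta> - \<mu> / 2 + 0) / L + (1 + \<eta>) / L = (D + \<mu> / 2) / L"
    using L by (simp add: field_simps)
  finally have Lb: "L * bregman n (hmu L \<eta> \<mu> n) (xstar \<eta> n) (\<lambda>_. 0) = D + \<mu> / 2"
    using L by simp
  define Den where "Den = 1 + \<mu> + \<eta> + \<mu> / 2 * (1 + \<eta>)^2"
  have Den0: "0 < Den" unfolding Den_def using mu eta0 by (simp add: add_pos_nonneg)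
  have "D \<le> real (card {..<n}) * (\<mu> / 2 * (1 + \<eta>)^2 + (1 + \<eta>))"
    unfolding D_def dmu_alt
  proof (rule sum_bounded_above)
    fix j assume "j \<in> {..<n}"
    then have j: "j < n" by simp
    have a: "xstar \<eta> n j \<le> 1 + \<eta>" "1 \<le> xstar \<eta> n j" using xs_mono[OF eta0, of 0 j n] j x0 by auto
    have "(xstar \<eta> n j)^2 \<le> (1 + \<eta>)^2" using a by (intro power_mono) auto
    then have "\<mu> / 2 * (xstar \<eta> n j)^2 \<le> \<mu> / 2 * (1 + \<eta>)^2" using mu by (intro mult_left_mono) auto
    moreover have "phimu \<mu> (xstar \<eta> n j) \<le> 1 + \<eta>" using phimu_le[OF mu(1), of "xstar \<eta> n j"] a by linarith
    ultimately show "\<mu> / 2 * (xstar \<eta> n j)^2 + phimu \<mu> (xstar \<eta> n j) \<le> \<mu> / 2 * (1 + \<eta>)^2 + (1 + \<eta>)" by linarith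
  qed
  then have "D \<le> real n * (\<mu> / 2 * (1 + \<eta>)^2 + (1 + \<eta>))" by simp
  moreover have "\<mu> / 2 \<le> real n * \<mu>" using n3 mu by (simp add: mult_right_mono)
  ultimately have "D + \<mu> / 2 \<le> real n * Den" unfolding Den_def by (simp add: algebra_simps)
  then have X: "(D + \<mu> / 2) / real n \<le> Den" using n0 by (simp add: divide_le_eq mult.commute)
  have "(D + \<mu> / 2) / real n * ((1 - \<mu>) / Den) \<le> Den * ((1 - \<mu>) / Den)"
    by (rule mult_right_mono[OF X]) (use mu Den0 in auto)
  also have "\<dots> = 1 - \<mu>" using Den0 by simp
  finally have RHS: "(D + \<mu> / 2) / real n * ((1 - \<mu>) / Den) \<le> 1 - \<mu>" .
  have rn: "real (2 * N + 1) = real n" using nN by simp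
  have "L * bregman n (hmu L \<eta> \<mu> n) (xstar \<eta> n) (\<lambda>_. 0) / real (2 * N + 1)
           * ((1 - \<mu>) / (1 + \<mu> + \<eta> + \<mu> / 2 * (1 + \<eta>)^2))
        = (D + \<mu> / 2) / real n * ((1 - \<mu>) / Den)"
    unfolding Lb rn Den_def ..
  also have "\<dots> \<le> 1 - \<mu> / 2" using RHS mu by linarith
  also have "\<dots> \<le> fmu \<eta> \<mu> n xbar - Inf (fmu \<eta> \<mu> n ` Rn n)" by (rule LHS)
  finally show ?thesis .
qed

end
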